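(* Let $m\ge4$, let $\mathcal W_1$ be an $m\times m$ quadrilateral labyrinth set in $Q$, and let $L_\infty$ be the associated quadrilateral labyrinth fractal. Then the interior of $L_\infty$ in $\mathbb{R}^2$ is empty.
   Context: Let $Q$ be a convex quadrilateral in $\mathbb{R}^2$. Divide $Q$ into two triangles by its shorter diagonal (either diagonal if they have equal length). Label the vertices $Q_1,Q_2,Q_3,Q_4$ anticlockwise, starting at an endpoint of that diagonal, so that the diagonal is $Q_1Q_3$. Let $\Delta_1$ be the closed triangle $Q_1Q_2Q_3$ and $\Delta_2$ the closed triangle $Q_3Q_4Q_1$. Every $x\in Q$ has a unique representation $x=\sum_{i=1}^4\alpha_iQ_i$, defined as follows. If $x\in\Delta_1$, then $\alpha_4=0$ and $(\alpha_1,\alpha_2,\alpha_3)$ are the barycentric coordinates of $x$ in $\Delta_1$. If $x\in\Delta_2$, then $\alpha_2=0$ and $(\alpha_1,\alpha_3,\alpha_4)$ are the barycentric coordinates of $x$ in $\Delta_2$. For an ordered quadruple $V=(V_1,\dots,V_4)$ define $P_V:Q\to\mathbb{R}^2$ by $P_V(x)=\sum_i\alpha_iV_i$. For an integer $m\ge2$, define the following index sets: - $A_1=\{(k_1,k_2,k_3,0)\in\mathbb{Z}_{\ge0}^4:k_1+k_2+k_3=m-1,\ k_2\ne0\}$, - $A_2=\{(k_1,0,k_3,k_4)\in\mathbb{Z}_{\ge0}^4:k_1+k_3+k_4=m-1,\ k_4\ne0\}$, - $A_3=\{(k_1,0,k_3,0)\in\mathbb{Z}_{\ge0}^4:k_1+k_3=m-1\}$,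 - $A=A_1\cup A_2\cup A_3$. For $k\in A$, let $S_m(k)$ be the quadrilateral with ordered vertices $R_1R_2R_3R_4$ given below. - If $k\in A_1$: $R_1=\frac{(k_1+1)Q_1+k_2Q_2+k_3Q_3}{m}$, $R_2=\frac{k_1Q_1+(k_2+1)Q_2+k_3Q_3}{m}$, $R_3=\frac{k_1Q_1+k_2Q_2+(k_3+1)Q_3}{m}$, $R_4=\frac{(k_1+1)Q_1+(k_2-1)Q_2+(k_3+1)Q_3}{m}$. - If $k\in A_2$: $R_1=\frac{(k_1+1)Q_1+k_3Q_3+k_4Q_4}{m}$, $R_2=\frac{(k_1+1)Q_1+(k_3+1)Q_3+(k_4-1)Q_4}{m}$, $R_3=\frac{k_1Q_1+(k_3+1)Q_3+k_4Q_4}{m}$, $R_4=\frac{k_1Q_1+k_3Q_3+(k_4+1)Q_4}{m}$. - If $k\in A_3$: $R_1=\frac{(k_1+1)Q_1+k_3Q_3}{m}$, $R_2=\frac{k_1Q_1+Q_2+k_3Q_3}{m}$, $R_3=\frac{k_1Q_1+(k_3+1)Q_3}{m}$, $R_4=\frac{k_1Q_1+k_3Q_3+Q_4}{m}$. Let $\mathcal S_m=\{S_m(k):k\in A\}$. For $\mathcal W\subseteq\mathcal S_m$, the graph $\mathcal G(\mathcal W)$ has vertex set $\mathcal W$, with two elements adjacent iff they have a common side. An $m\times m$ quadrilateral labyrinth set ($m\ge4$) is a set $\mathcal W_1\subseteq\mathcal S_m$ satisfying three properties. (1) Tree property: $\mathcal G(\mathcal W_1)$ is a tree. (2) Exit property: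 there is exactly one $(k_1,k_2,0,0)\in A$ with $S_m(k_1,k_2,0,0)\in\mathcal W_1$ and $S_m(0,0,k_2,k_1)\in\mathcal W_1$. There is also exactly one $(k_1,0,0,k_4)\in A$ with $S_m(k_1,0,0,k_4)\in\mathcal W_1$ and $S_m(0,k_1,k_4,0)\in\mathcal W_1$. (3) Corner property: $\mathcal W_1$ contains at most one element of $\{S_m(m-1,0,0,0),S_m(0,0,m-1,0)\}$ and at most one element of $\{S_m(0,m-1,0,0),S_m(0,0,0,m-1)\}$. Define recursively for $n\ge2$: $\mathcal W_n=\{P_{W}(W'):W'\in\mathcal W_1,\ W\in\mathcal W_{n-1}\}$. Here $P_W(W')$ is the quadrilateral whose ordered vertices are the images under $P_W$ of the ordered vertices of $W'$. Let $L_n=\bigcup_{W\in\mathcal W_n}W$ (closed regions) and $L_\infty=\bigcap_{n\ge1}L_n$. *)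

theory Defs
  imports "HOL-Analysis.Analysis"
begin

type_synonym pt = "real \<times> real"
type_synonym quad = "pt \<times> pt \<times> pt \<times> pt"
type_synonym idx = "nat \<times> nat \<times> nat \<times> nat"

definition orient :: "pt \<Rightarrow> pt \<Rightarrow> pt \<Rightarrow> real" where
  "orient a b c = (fst b - fst a) * (snd c - snd a) - (snd b - snd a) * (fst c - fst a)"

definition labelled_convex_quad :: "quad \<Rightarrow> bool" where
  "labelled_convex_quad Q = (case Q of (q1,q2,q3,q4) \<Rightarrow>
     orient q1 q2 q3 > 0 \<and> orient q2 q3 q4 > 0 \<and> orient q3 q4 q1 > 0 \<and> orient q4 q1 q2 > 0
     \<and> dist q1 q3 \<le> dist q2 q4)"

text \<open>The closed region of a quadrilateral (all quadrilaterals involved are convex).\<close>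
definition region :: "quad \<Rightarrow> pt set" where
  "region W = (case W of (v1,v2,v3,v4) \<Rightarrow> convex hull {v1,v2,v3,v4})"

definition sides :: "quad \<Rightarrow> pt set set" where
  "sides W = (case W of (v1,v2,v3,v4) \<Rightarrow>
     {closed_segment v1 v2, closed_segment v2 v3, closed_segment v3 v4, closed_segment v4 v1})"

definition qcoords :: "quad \<Rightarrow> pt \<Rightarrow> real \<times> real \<times> real \<times> real" where
  "qcoords Q x = (case Q of (q1,q2,q3,q4) \<Rightarrow>
     if x \<in> convex hull {q1,q2,q3} then
       (THE a. case a of (a1,a2,a3,a4) \<Rightarrow> a4 = 0 \<and> a1 \<ge> 0 \<and> a2 \<ge> 0 \<and> a3 \<ge> 0
          \<and> a1 + a2 + a3 = 1 \<and> x = a1 *\<^sub>R q1 + a2 *\<^sub>R q2 + a3 *\<^sub>R q3)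
     else
       (THE a. case a of (a1,a2,a3,a4) \<Rightarrow> a2 = 0 \<and> a1 \<ge> 0 \<and> a3 \<ge> 0 \<and> a4 \<ge> 0
          \<and> a1 + a3 + a4 = 1 \<and> x = a1 *\<^sub>R q1 + a3 *\<^sub>R q3 + a4 *\<^sub>R q4))"

definition PV :: "quad \<Rightarrow> quad \<Rightarrow> pt \<Rightarrow> pt" where
  "PV Q V x = (case qcoords Q x of (a1,a2,a3,a4) \<Rightarrow> case V of (v1,v2,v3,v4) \<Rightarrow>
     a1 *\<^sub>R v1 + a2 *\<^sub>R v2 + a3 *\<^sub>R v3 + a4 *\<^sub>R v4)"

definition qmap :: "(pt \<Rightarrow> pt) \<Rightarrow> quad \<Rightarrow> quad" where
  "qmap f W = (case W of (a,b,c,d) \<Rightarrow> (f a, f b, f c, f d))"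

definition PW :: "quad \<Rightarrow> quad \<Rightarrow> quad \<Rightarrow> quad" where
  "PW Q W W' = qmap (PV Q W) W'"

definition idxA :: "nat \<Rightarrow> idx set" where
  "idxA m = {(k1,k2,k3,k4).
      (k4 = 0 \<and> k1 + k2 + k3 = m - 1 \<and> k2 \<noteq> 0)
    \<or> (k2 = 0 \<and> k1 + k3 + k4 = m - 1 \<and> k4 \<noteq> 0)
    \<or> (k2 = 0 \<and> k4 = 0 \<and> k1 + k3 = m - 1)}"

definition lc :: "nat \<Rightarrow> quad \<Rightarrow> real \<Rightarrow> real \<Rightarrow> real \<Rightarrow> real \<Rightarrow> pt" where
  "lc m Q a b c d = (case Q of (q1,q2,q3,q4) \<Rightarrow>
     (1 / real m) *\<^sub>R (a *\<^sub>R q1 + b *\<^sub>R q2 + c *\<^sub>R q3 + d *\<^sub>R q4))"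

definition Sm :: "quad \<Rightarrow> nat \<Rightarrow> idx \<Rightarrow> quad" where
  "Sm Q m k = (case k of (n1,n2,n3,n4) \<Rightarrow>
     let k1 = real n1; k2 = real n2; k3 = real n3; k4 = real n4 in
     if n4 = 0 \<and> n2 \<noteq> 0 then
       (lc m Q (k1+1) k2 k3 0, lc m Q k1 (k2+1) k3 0, lc m Q k1 k2 (k3+1) 0,
        lc m Q (k1+1) (k2-1) (k3+1) 0)
     else if n2 = 0 \<and> n4 \<noteq> 0 then
       (lc m Q (k1+1) 0 k3 k4, lc m Q (k1+1) 0 (k3+1) (k4-1), lc m Q k1 0 (k3+1) k4,
        lc m Q k1 0 k3 (k4+1))
     else
       (lc m Q (k1+1) 0 k3 0, lc m Q k1 1 k3 0, lc m Q k1 0 (k3+1) 0, lc m Q k1 0 k3 1))"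

definition Sset :: "quad \<Rightarrow> nat \<Rightarrow> quad set" where
  "Sset Q m = Sm Q m ` idxA m"

definition adjacent :: "quad \<Rightarrow> quad \<Rightarrow> bool" where
  "adjacent W W' \<longleftrightarrow> W \<noteq> W' \<and> sides W \<inter> sides W' \<noteq> {}"

definition is_walk :: "('a \<Rightarrow> 'a \<Rightarrow> bool) \<Rightarrow> 'a set \<Rightarrow> 'a list \<Rightarrow> bool" where
  "is_walk E V xs \<longleftrightarrow> xs \<noteq> [] \<and> set xs \<subseteq> V \<and>
     (\<forall>i. Suc i < length xs \<longrightarrow> E (xs ! i) (xs ! Suc i))"

definition graph_connected :: "'a set \<Rightarrow> ('a \<Rightarrow> 'a \<Rightarrow> bool) \<Rightarrow> bool" where
  "graph_connected V E \<longleftrightarrow>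
     (\<forall>u\<in>V. \<forall>v\<in>V. \<exists>xs. is_walk E V xs \<and> hd xs = u \<and> last xs = v)"

definition graph_has_cycle :: "'a set \<Rightarrow> ('a \<Rightarrow> 'a \<Rightarrow> bool) \<Rightarrow> bool" where
  "graph_has_cycle V E \<longleftrightarrow>
     (\<exists>xs. is_walk E V xs \<and> length xs \<ge> 3 \<and> distinct xs \<and> E (last xs) (hd xs))"

definition graph_is_tree :: "'a set \<Rightarrow> ('a \<Rightarrow> 'a \<Rightarrow> bool) \<Rightarrow> bool" where
  "graph_is_tree V E \<longleftrightarrow> V \<noteq> {} \<and> graph_connected V E \<and> \<not> graph_has_cycle V E"

definition labyrinth_set :: "quad \<Rightarrow> nat \<Rightarrow> quad set \<Rightarrow> bool" where
  "labyrinth_set Q m W1 \<longleftrightarrow> m \<ge> 4 \<and> W1 \<subseteq> Sset Q m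
   \<and> graph_is_tree W1 adjacent
   \<and> (\<exists>!p. case p of (k1,k2) \<Rightarrow> (k1,k2,0,0) \<in> idxA m
          \<and> Sm Q m (k1,k2,0,0) \<in> W1 \<and> Sm Q m (0,0,k2,k1) \<in> W1)
   \<and> (\<exists>!p. case p of (k1,k4) \<Rightarrow> (k1,0,0,k4) \<in> idxA m
          \<and> Sm Q m (k1,0,0,k4) \<in> W1 \<and> Sm Q m (0,k1,k4,0) \<in> W1)
   \<and> \<not> (Sm Q m (m-1,0,0,0) \<in> W1 \<and> Sm Q m (0,0,m-1,0) \<in> W1)
   \<and> \<not> (Sm Q m (0,m-1,0,0) \<in> W1 \<and> Sm Q m (0,0,0,m-1) \<in> W1)"

fun Wlev :: "quad \<Rightarrow> quad set \<Rightarrow> nat \<Rightarrow> quad set" where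
  "Wlev Q W1 0 = {}"
| "Wlev Q W1 (Suc 0) = W1"
| "Wlev Q W1 (Suc (Suc n)) = {PW Q W W' | W W'. W' \<in> W1 \<and> W \<in> Wlev Q W1 (Suc n)}"

definition Llev :: "quad \<Rightarrow> quad set \<Rightarrow> nat \<Rightarrow> pt set" where
  "Llev Q W1 n = (\<Union>W\<in>Wlev Q W1 n. region W)"

definition Linf :: "quad \<Rightarrow> quad set \<Rightarrow> pt set" where
  "Linf Q W1 = (\<Inter>n\<in>{1..}. Llev Q W1 n)"

end

theory Submission
  imports Defs
begin


definition phi :: "real^2 \<Rightarrow> real \<times> real" where "phi v = (v$1, v$2)"
definition psi :: "real \<times> real \<Rightarrow> real^2" where "psi p = vector [fst p, snd p]"

lemma phi_psi[simp]: "phi (psi p) = p" by (simp add: phi_def psi_def)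
lemma psi_phi[simp]: "psi (phi v) = v"
  unfolding phi_def psi_def by (simp add: vec_eq_iff forall_2)

lemma linear_psi: "linear psi"
  by (rule linearI) (auto simp: psi_def vec_eq_iff forall_2)
lemma linear_phi: "linear phi"
  by (rule linearI) (auto simp: phi_def)

lemma mem_box_pair: "(x::real\<times>real) \<in> box l u \<longleftrightarrow>
  fst l < fst x \<and> fst x < fst u \<and> snd l < snd x \<and> snd x < snd u"
  by (auto simp: box_def Basis_prod_def inner_prod_def)

lemma Basis_real2: "(Basis::(real^2) set) = {axis 1 1, axis 2 1}"
  by (auto simp: Basis_vec_def UNIV_2)

lemma axis12: "axis (1::2) (1::real) \<noteq> axis 2 1"
  by (simp add: axis_eq_axis)

lemma lborel_phi: "(lborel :: (real\<times>real) measure) = distr lborel borel phi"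
proof (rule lborel_eqI)
  fix l u :: "real \<times> real"
  assume le: "\<And>b. b \<in> Basis \<Longrightarrow> l \<bullet> b \<le> u \<bullet> b"
  have m: "phi \<in> borel_measurable borel"
    by (intro borel_measurable_continuous_onI linear_continuous_on linear_conv_bounded_linear[THEN iffD1, OF linear_phi])
  have "phi -` box l u = box (psi l) (psi u)"
    by (auto simp: phi_def psi_def mem_box_cart forall_2 mem_box_pair)
  moreover have "fst l \<le> fst u" "snd l \<le> snd u" using le[of "(1,0)"] le[of "(0,1)"]
    by (auto simp: Basis_prod_def inner_prod_def)
  ultimately show "emeasure (distr lborel borel phi) (box l u) = (\<Prod>b\<in>Basis. (u - l) \<bullet> b)"
    using m by (simp add: emeasure_distr emeasure_lborel_box_eq Basis_prod_def psi_def
       inner_prod_def Basis_real2 axis12 cart_eq_inner_axis[symmetric] ennreal_mult mult.commute)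
qed simp

lemma measure_triangle:
  fixes a b c :: "real \<times> real"
  shows "measure lborel (convex hull {a,b,c}) = \<bar>orient a b c\<bar> / 2"
proof -
  let ?S = "convex hull {a,b,c}"
  have m: "phi \<in> borel_measurable borel"
    by (intro borel_measurable_continuous_onI linear_continuous_on linear_conv_bounded_linear[THEN iffD1, OF linear_phi])
  have Sb: "?S \<in> sets borel"
    by (intro borel_closed compact_imp_closed finite_imp_compact_convex_hull) auto
  have "measure lborel ?S = measure (distr lborel borel phi) ?S"
    using lborel_phi by simp
  also have "\<dots> = measure lborel (phi -` ?S)"
    using m Sb by (simp add: measure_distr)
  also have "phi -` ?S = psi ` ?S"
  proof (intro set_eqI iffI)
    fix x assume "x \<in> phi -` ?S" then show "x \<in> psi ` ?S"
      by (metis image_eqI psi_phi vimageE)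
  next
    fix x assume "x \<in> psi ` ?S" then show "x \<in> phi -` ?S" by auto
  qed
  also have "\<dots> = convex hull {psi a, psi b, psi c}"
    by (simp add: convex_hull_linear_image linear_psi)
  also have "measure lborel \<dots> = \<bar>orient a b c\<bar> / 2"
    by (simp add: content_triangle psi_def orient_def abs_minus_commute algebra_simps)
  finally show ?thesis .
qed

lemma card3_sub4:
  assumes "finite S" "S \<subseteq> {a,b,c,d}" "card S \<le> 3"
  shows "S \<subseteq> {a,b,c} \<or> S \<subseteq> {b,c,d} \<or> S \<subseteq> {c,d,a} \<or> S \<subseteq> {d,a,b}"
proof (rule ccontr)
  assume H: "\<not> (S \<subseteq> {a,b,c} \<or> S \<subseteq> {b,c,d} \<or> S \<subseteq> {c,d,a} \<or> S \<subseteq> {d,a,b})"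
  then have "a \<in> S" "b \<in> S" "c \<in> S" "d \<in> S" using assms(2) by auto
  then have "S = {a,b,c,d}" using assms(2) by auto
  with assms(3) have "card {a,b,c,d} \<le> 3" by simp
  then have "a = b \<or> a = c \<or> a = d \<or> b = c \<or> b = d \<or> c = d"
    by (auto simp: card_insert_if split: if_splits)
  then show False using H \<open>S = {a,b,c,d}\<close> by auto
qed

lemma hull4_sub:
  fixes a b c d :: "real \<times> real"
  shows "convex hull {a,b,c,d} \<subseteq> convex hull {a,b,c} \<union> convex hull {b,c,d} \<union> convex hull {c,d,a} \<union> convex hull {d,a,b}"
proof
  fix x assume "x \<in> convex hull {a,b,c,d}"
  then obtain S where S: "finite S" "S \<subseteq> {a,b,c,d}" "card S \<le> 3" "x \<in> convex hull S"
    by (subst (asm) caratheodory) auto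
  from card3_sub4[OF S(1-3)] S(4) show "x \<in> convex hull {a,b,c} \<union> convex hull {b,c,d} \<union> convex hull {c,d,a} \<union> convex hull {d,a,b}"
    by (meson UnI1 UnI2 hull_mono subsetD)
qed

lemma sets_hull[measurable]: "convex hull {a,b,c::real\<times>real} \<in> sets lborel"
  by (simp add: borel_closed compact_imp_closed finite_imp_compact_convex_hull)

lemma measure_hull4:
  fixes a b c d :: "real \<times> real"
  shows "measure lborel (convex hull {a,b,c,d}) \<le>
    (\<bar>orient a b c\<bar> + \<bar>orient b c d\<bar> + \<bar>orient c d a\<bar> + \<bar>orient d a b\<bar>) / 2"
proof -
  let ?U = "convex hull {a,b,c} \<union> convex hull {b,c,d} \<union> convex hull {c,d,a} \<union> convex hull {d,a,b}"
  have "?U \<in> fmeasurable lborel"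
    by (intro fmeasurable_compact compact_Un finite_imp_compact_convex_hull) auto
  then have "measure lborel (convex hull {a,b,c,d}) \<le> measure lborel ?U"
    by (intro measure_mono_fmeasurable hull4_sub)
      (auto intro: borel_closed compact_imp_closed finite_imp_compact_convex_hull)
  also have "\<dots> \<le> measure lborel (convex hull {a,b,c}) + measure lborel (convex hull {b,c,d})
      + measure lborel (convex hull {c,d,a}) + measure lborel (convex hull {d,a,b})"
    by (smt (verit) measure_Un_le sets.Un sets_hull)
  finally show ?thesis by (simp add: measure_triangle)
qed

lemma lin2_zero:
  fixes d2 d3 x2 x3 y2 y3 :: real
  assumes "d2*x2 + d3*x3 = 0" "d2*y2 + d3*y3 = 0" "x2*y3 - y2*x3 \<noteq> 0"
  shows "d2 = 0 \<and> d3 = 0"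
proof -
  have "d2*(x2*y3 - y2*x3) = y3*(d2*x2 + d3*x3) - x3*(d2*y2 + d3*y3)" by algebra
  then have "d2 = 0" using assms by simp
  have "d3*(x2*y3 - y2*x3) = x2*(d2*y2 + d3*y3) - y2*(d2*x2 + d3*x3)" by algebra
  then have "d3 = 0" using assms by simp
  with \<open>d2 = 0\<close> show ?thesis by simp
qed

lemma bary_unique:
  fixes p q r :: "real \<times> real"
  assumes "orient p q r \<noteq> 0" "a1+a2+a3 = 1" "b1+b2+b3 = (1::real)"
    "a1 *\<^sub>R p + a2 *\<^sub>R q + a3 *\<^sub>R r = b1 *\<^sub>R p + b2 *\<^sub>R q + b3 *\<^sub>R r"
  shows "a1 = b1 \<and> a2 = b2 \<and> a3 = b3"
proof -
  obtain p1 p2 q1 q2 r1 r2 where P: "p = (p1,p2)" "q = (q1,q2)" "r = (r1,r2)" by (metis prod.exhaust)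
  have a1: "a1 = 1 - a2 - a3" and b1: "b1 = 1 - b2 - b3" using assms by auto
  from assms(4) have e1: "a1*p1 + a2*q1 + a3*r1 = b1*p1 + b2*q1 + b3*r1"
    and e2: "a1*p2 + a2*q2 + a3*r2 = b1*p2 + b2*q2 + b3*r2" by (auto simp: P)
  have "(a2-b2)*(q1-p1) + (a3-b3)*(r1-p1) = 0" using e1 unfolding a1 b1 by (simp add: algebra_simps)
  moreover have "(a2-b2)*(q2-p2) + (a3-b3)*(r2-p2) = 0" using e2 unfolding a1 b1 by (simp add: algebra_simps)
  moreover have "(q1-p1)*(r2-p2) - (q2-p2)*(r1-p1) \<noteq> 0" using assms(1) by (simp add: orient_def P)
  ultimately have "a2 - b2 = 0 \<and> a3 - b3 = 0" by (rule lin2_zero)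
  then show ?thesis using a1 b1 by simp
qed

lemma orient13_tri:
  fixes q1 q2 q3 :: "real \<times> real"
  assumes "u+v+w = 1"
  shows "orient q1 q3 (u *\<^sub>R q1 + v *\<^sub>R q2 + w *\<^sub>R q3) = - v * orient q1 q2 q3"
proof -
  have u: "u = 1 - v - w" using assms by simp
  show ?thesis unfolding u
    by (cases q1, cases q2, cases q3) (simp add: orient_def algebra_simps)
qed

lemma orient13_tri2:
  fixes q1 q3 q4 :: "real \<times> real"
  assumes "u+v+w = 1"
  shows "orient q1 q3 (u *\<^sub>R q1 + v *\<^sub>R q3 + w *\<^sub>R q4) = w * orient q3 q4 q1"
proof -
  have u: "u = 1 - v - w" using assms by simp
  show ?thesis unfolding u
    by (cases q1, cases q3, cases q4) (simp add: orient_def algebra_simps)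
qed

lemma qcoords1:
  assumes "orient q1 q2 q3 > 0" "a1 \<ge> 0" "a2 \<ge> 0" "a3 \<ge> 0" "a1+a2+a3 = 1"
  shows "qcoords (q1,q2,q3,q4) (a1 *\<^sub>R q1 + a2 *\<^sub>R q2 + a3 *\<^sub>R q3) = (a1,a2,a3,0)"
proof -
  have "a1 *\<^sub>R q1 + a2 *\<^sub>R q2 + a3 *\<^sub>R q3 \<in> convex hull {q1,q2,q3}"
    using assms by (auto simp: convex_hull_3)
  moreover have "(THE a. case a of (b1,b2,b3,b4) \<Rightarrow> b4 = (0::real) \<and> b1 \<ge> 0 \<and> b2 \<ge> 0 \<and> b3 \<ge> 0
          \<and> b1 + b2 + b3 = 1 \<and> a1 *\<^sub>R q1 + a2 *\<^sub>R q2 + a3 *\<^sub>R q3 = b1 *\<^sub>R q1 + b2 *\<^sub>R q2 + b3 *\<^sub>R q3) = (a1,a2,a3,0)"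
  proof (rule the_equality)
    show "case (a1,a2,a3,0::real) of (b1,b2,b3,b4) \<Rightarrow> b4 = 0 \<and> b1 \<ge> 0 \<and> b2 \<ge> 0 \<and> b3 \<ge> 0
          \<and> b1 + b2 + b3 = 1 \<and> a1 *\<^sub>R q1 + a2 *\<^sub>R q2 + a3 *\<^sub>R q3 = b1 *\<^sub>R q1 + b2 *\<^sub>R q2 + b3 *\<^sub>R q3"
      using assms by simp
  next
    fix b assume "case b of (b1,b2,b3,b4) \<Rightarrow> b4 = (0::real) \<and> b1 \<ge> 0 \<and> b2 \<ge> 0 \<and> b3 \<ge> 0
          \<and> b1 + b2 + b3 = 1 \<and> a1 *\<^sub>R q1 + a2 *\<^sub>R q2 + a3 *\<^sub>R q3 = b1 *\<^sub>R q1 + b2 *\<^sub>R q2 + b3 *\<^sub>R q3"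
    moreover obtain b1 b2 b3 b4 where bb: "b = (b1,b2,b3,b4)" by (metis prod.exhaust)
    ultimately have "b4 = 0" "b1+b2+b3 = 1" "a1 *\<^sub>R q1 + a2 *\<^sub>R q2 + a3 *\<^sub>R q3 = b1 *\<^sub>R q1 + b2 *\<^sub>R q2 + b3 *\<^sub>R q3"
      by auto
    with bary_unique[of q1 q2 q3 a1 a2 a3 b1 b2 b3] assms show "b = (a1,a2,a3,0)"
      by (simp add: bb)
  qed
  ultimately show ?thesis by (simp add: qcoords_def)
qed

lemma qcoords2:
  assumes "orient q1 q2 q3 > 0" "orient q3 q4 q1 > 0" "a1 \<ge> 0" "a3 \<ge> 0" "a4 > 0" "a1+a3+a4 = 1"
  shows "qcoords (q1,q2,q3,q4) (a1 *\<^sub>R q1 + a3 *\<^sub>R q3 + a4 *\<^sub>R q4) = (a1,0,a3,a4)"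
proof -
  let ?x = "a1 *\<^sub>R q1 + a3 *\<^sub>R q3 + a4 *\<^sub>R q4"
  have "?x \<notin> convex hull {q1,q2,q3}"
  proof
    assume "?x \<in> convex hull {q1,q2,q3}"
    then obtain u v w where uvw: "0 \<le> u" "0 \<le> v" "0 \<le> w" "u+v+w = 1" "?x = u *\<^sub>R q1 + v *\<^sub>R q2 + w *\<^sub>R q3"
      by (auto simp: convex_hull_3)
    have "orient q1 q3 ?x = a4 * orient q3 q4 q1" using assms(6) by (rule orient13_tri2)
    moreover have "orient q1 q3 ?x = - v * orient q1 q2 q3" using uvw(4) unfolding uvw(5) by (rule orient13_tri)
    moreover have "a4 * orient q3 q4 q1 > 0" using assms by simp
    moreover have "v * orient q1 q2 q3 \<ge> 0" using assms uvw by simp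
    ultimately show False by linarith
  qed
  moreover have "(THE a. case a of (b1,b2,b3,b4) \<Rightarrow> b2 = (0::real) \<and> b1 \<ge> 0 \<and> b3 \<ge> 0 \<and> b4 \<ge> 0
          \<and> b1 + b3 + b4 = 1 \<and> ?x = b1 *\<^sub>R q1 + b3 *\<^sub>R q3 + b4 *\<^sub>R q4) = (a1,0,a3,a4)"
  proof (rule the_equality)
    show "case (a1,0::real,a3,a4) of (b1,b2,b3,b4) \<Rightarrow> b2 = 0 \<and> b1 \<ge> 0 \<and> b3 \<ge> 0 \<and> b4 \<ge> 0
          \<and> b1 + b3 + b4 = 1 \<and> ?x = b1 *\<^sub>R q1 + b3 *\<^sub>R q3 + b4 *\<^sub>R q4"
      using assms by simp
  next
    have o: "orient q1 q3 q4 \<noteq> 0" using assms(2) by (simp add: orient_def algebra_simps)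
    fix b assume "case b of (b1,b2,b3,b4) \<Rightarrow> b2 = (0::real) \<and> b1 \<ge> 0 \<and> b3 \<ge> 0 \<and> b4 \<ge> 0
          \<and> b1 + b3 + b4 = 1 \<and> ?x = b1 *\<^sub>R q1 + b3 *\<^sub>R q3 + b4 *\<^sub>R q4"
    moreover obtain b1 b2 b3 b4 where bb: "b = (b1,b2,b3,b4)" by (metis prod.exhaust)
    ultimately have "b2 = 0" "b1+b3+b4 = 1" "?x = b1 *\<^sub>R q1 + b3 *\<^sub>R q3 + b4 *\<^sub>R q4"
      by auto
    with bary_unique[OF o, of a1 a3 a4 b1 b3 b4] assms show "b = (a1,0,a3,a4)"
      by (simp add: bb)
  qed
  ultimately show ?thesis by (simp add: qcoords_def)
qed

lemma PV_lc:
  assumes "orient q1 q2 q3 > 0" "orient q3 q4 q1 > 0" "m > 0" "a \<ge> 0" "b \<ge> 0" "c \<ge> 0" "d \<ge> 0"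
    "a+b+c+d = real m" "b = 0 \<or> d = 0"
  shows "PV (q1,q2,q3,q4) W (lc m (q1,q2,q3,q4) a b c d) = lc m W a b c d"
proof -
  obtain w1 w2 w3 w4 where W: "W = (w1,w2,w3,w4)" by (metis prod.exhaust)
  have mpos: "real m > 0" using assms by simp
  show ?thesis
  proof (cases "d = 0")
    case True
    have e: "lc m (q1,q2,q3,q4) a b c d = (a/m) *\<^sub>R q1 + (b/m) *\<^sub>R q2 + (c/m) *\<^sub>R q3"
      by (simp add: lc_def True scaleR_add_right divide_inverse_commute)
    have s: "a/m + b/m + c/m = 1" using assms True mpos by (simp add: field_simps)
    have "qcoords (q1,q2,q3,q4) (lc m (q1,q2,q3,q4) a b c d) = (a/m, b/m, c/m, 0)"
      unfolding e by (rule qcoords1) (use assms s in auto)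
    then show ?thesis by (simp add: PV_def W lc_def True scaleR_add_right divide_inverse_commute)
  next
    case False
    then have b0: "b = 0" and dpos: "d > 0" using assms by auto
    have e: "lc m (q1,q2,q3,q4) a b c d = (a/m) *\<^sub>R q1 + (c/m) *\<^sub>R q3 + (d/m) *\<^sub>R q4"
      by (simp add: lc_def b0 scaleR_add_right divide_inverse_commute)
    have s: "a/m + c/m + d/m = 1" using assms b0 mpos by (simp add: field_simps)
    have "qcoords (q1,q2,q3,q4) (lc m (q1,q2,q3,q4) a b c d) = (a/m, 0, c/m, d/m)"
      unfolding e by (rule qcoords2) (use assms s dpos mpos in auto)
    then show ?thesis by (simp add: PV_def W lc_def b0 scaleR_add_right divide_inverse_commute)
  qed
qed



lemma PW_Sm:
  assumes "orient q1 q2 q3 > 0" "orient q3 q4 q1 > 0" "m > 0" "k \<in> idxA m"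
  shows "PW (q1,q2,q3,q4) W (Sm (q1,q2,q3,q4) m k) = Sm W m k"
proof -
  obtain n1 n2 n3 n4 where k: "k = (n1,n2,n3,n4)" by (metis prod.exhaust)
  note PV = PV_lc[OF assms(1,2,3)]
  have m1: "real (m-1) = real m - 1" using assms(3) by (simp add: of_nat_diff)
  let ?Q = "(q1,q2,q3,q4)"
  consider (A1) "n4 = 0" "n2 \<noteq> 0" "n1+n2+n3 = m-1" | (A2) "n2 = 0" "n4 \<noteq> 0" "n1+n3+n4 = m-1"
    | (A3) "n2 = 0" "n4 = 0" "n1+n3 = m-1"
    using assms(4) by (auto simp: idxA_def k)
  then show ?thesis
  proof cases
    case A1
    from A1 have "real (n1+n2+n3) = real (m-1)" by (simp only:)
    then have r: "real n1 + real n2 + real n3 = real m - 1" using m1 by simp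
    have n2: "real n2 \<ge> 1" using A1 by simp
    have S: "\<And>V. Sm V m k = (lc m V (real n1 + 1) n2 n3 0, lc m V n1 (real n2 + 1) n3 0, lc m V n1 n2 (real n3 + 1) 0,
        lc m V (real n1 + 1) (real n2 - 1) (real n3 + 1) 0)" using A1 by (simp add: Sm_def k Let_def)
    have "PV ?Q W (lc m ?Q (real n1 + 1) n2 n3 0) = lc m W (real n1 + 1) n2 n3 0" by (rule PV) (use r in auto)
    moreover have "PV ?Q W (lc m ?Q n1 (real n2 + 1) n3 0) = lc m W n1 (real n2 + 1) n3 0" by (rule PV) (use r in auto)
    moreover have "PV ?Q W (lc m ?Q n1 n2 (real n3 + 1) 0) = lc m W n1 n2 (real n3 + 1) 0" by (rule PV) (use r in auto)
    moreover have "PV ?Q W (lc m ?Q (real n1 + 1) (real n2 - 1) (real n3 + 1) 0) = lc m W (real n1 + 1) (real n2 - 1) (real n3 + 1) 0" by (rule PV) (use r n2 in auto)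
    ultimately show ?thesis unfolding S PW_def qmap_def by simp
  next
    case A2
    from A2 have "real (n1+n3+n4) = real (m-1)" by (simp only:)
    then have r: "real n1 + real n3 + real n4 = real m - 1" using m1 by simp
    have n4: "real n4 \<ge> 1" using A2 by simp
    have S: "\<And>V. Sm V m k = (lc m V (real n1 + 1) 0 n3 n4, lc m V (real n1 + 1) 0 (real n3 + 1) (real n4 - 1), lc m V n1 0 (real n3 + 1) n4,
        lc m V n1 0 n3 (real n4 + 1))" using A2 by (simp add: Sm_def k Let_def)
    have "PV ?Q W (lc m ?Q (real n1 + 1) 0 n3 n4) = lc m W (real n1 + 1) 0 n3 n4" by (rule PV) (use r in auto)
    moreover have "PV ?Q W (lc m ?Q (real n1 + 1) 0 (real n3 + 1) (real n4 - 1)) = lc m W (real n1 + 1) 0 (real n3 + 1) (real n4 - 1)" by (rule PV) (use r n4 in auto)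
    moreover have "PV ?Q W (lc m ?Q n1 0 (real n3 + 1) n4) = lc m W n1 0 (real n3 + 1) n4" by (rule PV) (use r in auto)
    moreover have "PV ?Q W (lc m ?Q n1 0 n3 (real n4 + 1)) = lc m W n1 0 n3 (real n4 + 1)" by (rule PV) (use r in auto)
    ultimately show ?thesis unfolding S PW_def qmap_def by simp
  next
    case A3
    from A3 have "real (n1+n3) = real (m-1)" by (simp only:)
    then have r: "real n1 + real n3 = real m - 1" using m1 by simp
    have S: "\<And>V. Sm V m k = (lc m V (real n1 + 1) 0 n3 0, lc m V n1 1 n3 0, lc m V n1 0 (real n3 + 1) 0,
        lc m V n1 0 n3 1)" using A3 by (simp add: Sm_def k Let_def)
    have "PV ?Q W (lc m ?Q (real n1 + 1) 0 n3 0) = lc m W (real n1 + 1) 0 n3 0" by (rule PV) (use r in auto)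
    moreover have "PV ?Q W (lc m ?Q n1 1 n3 0) = lc m W n1 1 n3 0" by (rule PV) (use r in auto)
    moreover have "PV ?Q W (lc m ?Q n1 0 (real n3 + 1) 0) = lc m W n1 0 (real n3 + 1) 0" by (rule PV) (use r in auto)
    moreover have "PV ?Q W (lc m ?Q n1 0 n3 1) = lc m W n1 0 n3 1" by (rule PV) (use r in auto)
    ultimately show ?thesis unfolding S PW_def qmap_def by simp
  qed
qed

definition oA :: "quad \<Rightarrow> real" where "oA W = (case W of (a,b,c,d) \<Rightarrow> orient a b c)"
definition oB :: "quad \<Rightarrow> real" where "oB W = (case W of (a,b,c,d) \<Rightarrow> orient c d a)"
definition oC :: "quad \<Rightarrow> real" where "oC W = (case W of (a,b,c,d) \<Rightarrow> orient b c d)"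
definition oD :: "quad \<Rightarrow> real" where "oD W = (case W of (a,b,c,d) \<Rightarrow> orient d a b)"

lemma orient_affine:
  "orient (s *\<^sub>R (P + x)) (s *\<^sub>R (P + y)) (s *\<^sub>R (P + z)) = s^2 * orient x y z"
  by (cases P, cases x, cases y, cases z) (simp add: orient_def power2_eq_square algebra_simps)

lemma orient_cyc: "orient a b c = orient b c a"
  by (cases a, cases b, cases c) (simp add: orient_def algebra_simps)

lemma Sm_forms:
  assumes "m > 0" "k \<in> idxA m" "W = (v1,v2,v3,v4)" "k = (n1,n2,n3,n4)"
  shows "n4 = 0 \<and> n2 \<noteq> 0 \<Longrightarrow> Sm W m k =
     (let s = 1/real m; P = real n1 *\<^sub>R v1 + real n2 *\<^sub>R v2 + real n3 *\<^sub>R v3 in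
       (s *\<^sub>R (P + v1), s *\<^sub>R (P + v2), s *\<^sub>R (P + v3), s *\<^sub>R (P + (v1 - v2 + v3))))"
  and "n2 = 0 \<and> n4 \<noteq> 0 \<Longrightarrow> Sm W m k =
     (let s = 1/real m; P = real n1 *\<^sub>R v1 + real n3 *\<^sub>R v3 + real n4 *\<^sub>R v4 in
       (s *\<^sub>R (P + v1), s *\<^sub>R (P + (v1 + v3 - v4)), s *\<^sub>R (P + v3), s *\<^sub>R (P + v4)))"
  and "n2 = 0 \<and> n4 = 0 \<Longrightarrow> Sm W m k =
     (let s = 1/real m; P = real n1 *\<^sub>R v1 + real n3 *\<^sub>R v3 in
       (s *\<^sub>R (P + v1), s *\<^sub>R (P + v2), s *\<^sub>R (P + v3), s *\<^sub>R (P + v4)))"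
  by (auto simp: Sm_def assms(3,4) Let_def lc_def algebra_simps)

lemma Sm_orients:
  assumes "m > 0" "k \<in> idxA m" "k = (n1,n2,n3,n4)"
  shows "n4 = 0 \<and> n2 \<noteq> 0 \<Longrightarrow> oA (Sm W m k) = oA W / real m ^ 2 \<and> oB (Sm W m k) = oA W / real m ^ 2
           \<and> oC (Sm W m k) = oA W / real m ^ 2 \<and> oD (Sm W m k) = oA W / real m ^ 2"
  and "n2 = 0 \<and> n4 \<noteq> 0 \<Longrightarrow> oA (Sm W m k) = oB W / real m ^ 2 \<and> oB (Sm W m k) = oB W / real m ^ 2
           \<and> oC (Sm W m k) = oB W / real m ^ 2 \<and> oD (Sm W m k) = oB W / real m ^ 2"
  and "n2 = 0 \<and> n4 = 0 \<Longrightarrow> oA (Sm W m k) = oA W / real m ^ 2 \<and> oB (Sm W m k) = oB W / real m ^ 2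
           \<and> oC (Sm W m k) = oC W / real m ^ 2 \<and> oD (Sm W m k) = oD W / real m ^ 2"
proof -
  obtain v1 v2 v3 v4 where W: "W = (v1,v2,v3,v4)" by (metis prod.exhaust)
  note F = Sm_forms[OF assms(1,2) W assms(3)]
  have sq: "(1 / real m)^2 = 1 / real m ^ 2" by (simp add: power_divide)
  have e1: "orient v2 v3 (v1 - v2 + v3) = orient v1 v2 v3" "orient v3 (v1 - v2 + v3) v1 = orient v1 v2 v3"
     "orient (v1 - v2 + v3) v1 v2 = orient v1 v2 v3"
    by (cases v1, cases v2, cases v3, simp add: orient_def algebra_simps)+
  have e2: "orient v1 (v1 + v3 - v4) v3 = orient v3 v4 v1" "orient (v1 + v3 - v4) v3 v4 = orient v3 v4 v1"
     "orient v4 v1 (v1 + v3 - v4) = orient v3 v4 v1"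
    by (cases v1, cases v3, cases v4, simp add: orient_def algebra_simps)+
  show "n4 = 0 \<and> n2 \<noteq> 0 \<Longrightarrow> oA (Sm W m k) = oA W / real m ^ 2 \<and> oB (Sm W m k) = oA W / real m ^ 2
           \<and> oC (Sm W m k) = oA W / real m ^ 2 \<and> oD (Sm W m k) = oA W / real m ^ 2"
    using F(1) by (simp add: Let_def oA_def oB_def oC_def oD_def orient_affine W e1 sq)
  show "n2 = 0 \<and> n4 \<noteq> 0 \<Longrightarrow> oA (Sm W m k) = oB W / real m ^ 2 \<and> oB (Sm W m k) = oB W / real m ^ 2
           \<and> oC (Sm W m k) = oB W / real m ^ 2 \<and> oD (Sm W m k) = oB W / real m ^ 2"
    using F(2) by (simp add: Let_def oA_def oB_def oC_def oD_def orient_affine W e2 sq)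
  show "n2 = 0 \<and> n4 = 0 \<Longrightarrow> oA (Sm W m k) = oA W / real m ^ 2 \<and> oB (Sm W m k) = oB W / real m ^ 2
           \<and> oC (Sm W m k) = oC W / real m ^ 2 \<and> oD (Sm W m k) = oD W / real m ^ 2"
    using F(3) by (simp add: Let_def oA_def oB_def oC_def oD_def orient_affine W sq)
qed

definition J :: "nat \<Rightarrow> (nat \<times> nat) set" where "J m = {(i,j). 1 \<le> i \<and> i + j < m}"

lemma finite_J: "finite (J m)"
  by (rule finite_subset[of _ "{..<m} \<times> {..<m}"]) (auto simp: J_def)

lemma card_J: "2 * card (J m) + m = m * m"
proof (induction m)
  case 0 then show ?case by (simp add: J_def)
next
  case (Suc m)
  have eq: "J (Suc m) = J m \<union> (\<lambda>i. (i, m - i)) ` {1..m}"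
    by (auto simp: J_def image_iff) 
  have d: "J m \<inter> (\<lambda>i. (i, m - i)) ` {1..m} = {}" by (auto simp: J_def)
  have c: "card ((\<lambda>i. (i, m - i)) ` {1..m}) = m"
    by (subst card_image) (auto simp: inj_on_def)
  have "card (J (Suc m)) = card (J m) + m"
    unfolding eq by (subst card_Un_disjoint) (use finite_J d c in auto)
  with Suc show ?case by simp
qed

definition f1 :: "nat \<Rightarrow> nat \<times> nat \<Rightarrow> idx" where "f1 m p = (case p of (i,j) \<Rightarrow> (m-1-i-j, i, j, 0))"
definition f2 :: "nat \<Rightarrow> nat \<times> nat \<Rightarrow> idx" where "f2 m p = (case p of (i,j) \<Rightarrow> (m-1-i-j, 0, j, i))"
definition f3 :: "nat \<Rightarrow> nat \<Rightarrow> idx" where "f3 m j = (m-1-j, 0, j, 0)"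

lemma idxA_decomp:
  assumes "m > 0"
  shows "idxA m = f1 m ` J m \<union> f2 m ` J m \<union> f3 m ` {..<m}"
proof (intro set_eqI iffI)
  fix k assume "k \<in> idxA m"
  then obtain n1 n2 n3 n4 where k: "k = (n1,n2,n3,n4)" and
    "(n4 = 0 \<and> n1 + n2 + n3 = m - 1 \<and> n2 \<noteq> 0)
    \<or> (n2 = 0 \<and> n1 + n3 + n4 = m - 1 \<and> n4 \<noteq> 0)
    \<or> (n2 = 0 \<and> n4 = 0 \<and> n1 + n3 = m - 1)" by (auto simp: idxA_def)
  then consider "n4 = 0" "n1 + n2 + n3 = m - 1" "n2 \<noteq> 0" | "n2 = 0" "n1 + n3 + n4 = m - 1" "n4 \<noteq> 0"
    | "n2 = 0" "n4 = 0" "n1 + n3 = m - 1" by blast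
  then show "k \<in> f1 m ` J m \<union> f2 m ` J m \<union> f3 m ` {..<m}"
  proof cases
    case 1
    then have "k = f1 m (n2,n3)" "(n2,n3) \<in> J m" using assms by (auto simp: k f1_def J_def)
    then show ?thesis by blast
  next
    case 2
    then have "k = f2 m (n4,n3)" "(n4,n3) \<in> J m" using assms by (auto simp: k f2_def J_def)
    then show ?thesis by blast
  next
    case 3
    then have "k = f3 m n3" "n3 \<in> {..<m}" using assms by (auto simp: k f3_def)
    then show ?thesis by blast
  qed
next
  fix k assume "k \<in> f1 m ` J m \<union> f2 m ` J m \<union> f3 m ` {..<m}"
  then show "k \<in> idxA m" using assms by (auto simp: idxA_def f1_def f2_def f3_def J_def)
qed

lemma idxA_finite: "m > 0 \<Longrightarrow> finite (idxA m)"
  by (simp add: idxA_decomp finite_J)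

lemma inj_f1: "inj_on (f1 m) (J m)" by (auto simp: inj_on_def f1_def J_def)
lemma inj_f2: "inj_on (f2 m) (J m)" by (auto simp: inj_on_def f2_def J_def)
lemma inj_f3: "inj_on (f3 m) {..<m}" by (auto simp: inj_on_def f3_def)

definition T :: "quad \<Rightarrow> real" where "T W = oA W + oB W"

lemma sum_idxA:
  assumes "m > 0"
  shows "(\<Sum>k\<in>idxA m. g k) = (\<Sum>p\<in>J m. g (f1 m p)) + (\<Sum>p\<in>J m. g (f2 m p)) + (\<Sum>j<m. g (f3 m j))"
proof -
  have d1: "f1 m ` J m \<inter> f2 m ` J m = {}" by (auto simp: f1_def f2_def J_def)
  have d2: "(f1 m ` J m \<union> f2 m ` J m) \<inter> f3 m ` {..<m} = {}" by (auto simp: f1_def f2_def f3_def J_def)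
  show ?thesis
    unfolding idxA_decomp[OF assms]
    by (simp add: sum.union_disjoint d1 d2 finite_J sum.reindex inj_f1 inj_f2 inj_f3)
qed

lemma sum_T_Sm:
  assumes "m > 0"
  shows "(\<Sum>k\<in>idxA m. T (Sm W m k)) = T W"
proof -
  have h1: "T (Sm W m (f1 m p)) = 2 * oA W / real m ^ 2" if "p \<in> J m" for p
  proof -
    obtain i j where p: "p = (i,j)" by (metis prod.exhaust)
    have "f1 m p \<in> idxA m" using that assms idxA_decomp by blast
    with Sm_orients(1)[OF assms this, of "m-1-i-j" i j 0] that show ?thesis
      by (simp add: p f1_def J_def T_def)
  qed
  have h2: "T (Sm W m (f2 m p)) = 2 * oB W / real m ^ 2" if "p \<in> J m" for p
  proof -
    obtain i j where p: "p = (i,j)" by (metis prod.exhaust)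
    have "f2 m p \<in> idxA m" using that assms idxA_decomp by blast
    with Sm_orients(2)[OF assms this, of "m-1-i-j" 0 j i] that show ?thesis
      by (simp add: p f2_def J_def T_def)
  qed
  have h3: "T (Sm W m (f3 m j)) = T W / real m ^ 2" if "j < m" for j
  proof -
    have "f3 m j \<in> idxA m" using that assms idxA_decomp by blast
    with Sm_orients(3)[OF assms this, of "m-1-j" 0 j 0] show ?thesis
      by (simp add: f3_def T_def add_divide_distrib)
  qed
  have "(\<Sum>k\<in>idxA m. T (Sm W m k)) = real (card (J m)) * (2 * oA W / real m ^ 2)
     + real (card (J m)) * (2 * oB W / real m ^ 2) + real m * (T W / real m ^ 2)"
  proof -
    have "(\<Sum>p\<in>J m. T (Sm W m (f1 m p))) = (\<Sum>p\<in>J m. 2 * oA W / real m ^ 2)" by (rule sum.cong) (auto simp: h1)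
    moreover have "(\<Sum>p\<in>J m. T (Sm W m (f2 m p))) = (\<Sum>p\<in>J m. 2 * oB W / real m ^ 2)" by (rule sum.cong) (auto simp: h2)
    moreover have "(\<Sum>j<m. T (Sm W m (f3 m j))) = (\<Sum>j<m. T W / real m ^ 2)" by (rule sum.cong) (auto simp: h3)
    ultimately show ?thesis by (simp add: sum_idxA[OF assms])
  qed
  also have "\<dots> = (2 * real (card (J m)) + real m) * T W / real m ^ 2"
    by (simp add: T_def add_divide_distrib[symmetric] algebra_simps)
  also have "2 * real (card (J m)) + real m = real m * real m"
    using card_J[of m] by (metis of_nat_add of_nat_mult of_nat_numeral)
  finally show ?thesis using assms by (simp add: power2_eq_square)
qed

definition Good :: "real \<Rightarrow> quad \<Rightarrow> bool" where
  "Good \<mu> W \<longleftrightarrow> oA W > 0 \<and> oB W > 0 \<and> oC W > 0 \<and> oD W > 0 \<and> oA W \<ge> \<mu> * T W \<and> oB W \<ge> \<mu> * T W"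

lemma idx_cases:
  assumes "k \<in> idxA m"
  obtains n1 n2 n3 n4 where "k = (n1,n2,n3,n4)" "n4 = 0 \<and> n2 \<noteq> 0"
  | n1 n2 n3 n4 where "k = (n1,n2,n3,n4)" "n2 = 0 \<and> n4 \<noteq> 0"
  | n1 n2 n3 n4 where "k = (n1,n2,n3,n4)" "n2 = 0 \<and> n4 = 0"
  using assms by (auto simp: idxA_def)

lemma Good_Sm:
  assumes "m > 0" "k \<in> idxA m" "Good \<mu> W" "\<mu> \<le> 1/2"
  shows "Good \<mu> (Sm W m k) \<and> T (Sm W m k) \<ge> 2 * \<mu> * T W / real m ^ 2"
proof -
  have mp: "real m ^ 2 > 0" using assms by simp
  from assms(2) show ?thesis
  proof (cases rule: idx_cases)
    case (1 n1 n2 n3 n4)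
    note o = Sm_orients(1)[OF assms(1,2) 1(1) 1(2), of W]
    show ?thesis using assms(3,4) mp
      mult_right_mono[of "\<mu> * oA W + \<mu> * oB W" "oA W" "2*real m^2"]
      mult_right_mono[of "\<mu> * oA W + \<mu> * oB W" "oB W" "2*real m^2"]
      unfolding Good_def T_def
      by (simp only: o) (auto simp: divide_simps algebra_simps)
  next
    case (2 n1 n2 n3 n4)
    note o = Sm_orients(2)[OF assms(1,2) 2(1) 2(2), of W]
    show ?thesis using assms(3,4) mp
      mult_right_mono[of "\<mu> * oA W + \<mu> * oB W" "oA W" "2*real m^2"]
      mult_right_mono[of "\<mu> * oA W + \<mu> * oB W" "oB W" "2*real m^2"]
      unfolding Good_def T_def
      by (simp only: o) (auto simp: divide_simps algebra_simps)
  next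
    case (3 n1 n2 n3 n4)
    note o = Sm_orients(3)[OF assms(1,2) 3(1) 3(2), of W]
    show ?thesis using assms(3,4) mp
      mult_right_mono[of "\<mu> * oA W + \<mu> * oB W" "oA W" "2*real m^2"]
      mult_right_mono[of "\<mu> * oA W + \<mu> * oB W" "oB W" "2*real m^2"]
      unfolding Good_def T_def
      by (simp only: o) (auto simp: divide_simps algebra_simps)
  qed
qed

lemma measure_region:
  assumes "Good \<mu> W"
  shows "measure lborel (region W) \<le> T W"
proof -
  obtain v1 v2 v3 v4 where W: "W = (v1,v2,v3,v4)" by (metis prod.exhaust)
  have id: "orient v1 v2 v3 + orient v3 v4 v1 = orient v2 v3 v4 + orient v4 v1 v2"
    by (cases v1, cases v2, cases v3, cases v4) (simp add: orient_def algebra_simps)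
  have "measure lborel (region W) \<le> (\<bar>orient v1 v2 v3\<bar> + \<bar>orient v2 v3 v4\<bar> + \<bar>orient v3 v4 v1\<bar> + \<bar>orient v4 v1 v2\<bar>) / 2"
    unfolding W region_def using measure_hull4[of v1 v2 v3 v4] by simp
  also have "\<dots> = T W" using assms id unfolding Good_def T_def oA_def oB_def oC_def oD_def W by simp
  finally show ?thesis .
qed

lemma lc_inj3:
  assumes "orient q1 q2 q3 > 0" "m > 0"
    "a \<ge> 0" "b \<ge> 0" "c \<ge> 0" "a+b+c = real m"
    "a' \<ge> 0" "b' \<ge> 0" "c' \<ge> 0" "a'+b'+c' = real m"
    "lc m (q1,q2,q3,q4) a b c 0 = lc m (q1,q2,q3,q4) a' b' c' 0"
  shows "a = a' \<and> b = b' \<and> c = c'"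
proof -
  have mp: "real m > 0" using assms by simp
  have e: "\<And>a b c. lc m (q1,q2,q3,q4) a b c 0 = (a/m) *\<^sub>R q1 + (b/m) *\<^sub>R q2 + (c/m) *\<^sub>R q3"
    by (simp add: lc_def scaleR_add_right divide_inverse_commute)
  have s1: "a/m + b/m + c/m = 1" using assms(6) mp by (simp add: add_divide_distrib[symmetric])
  have s2: "a'/m + b'/m + c'/m = 1" using assms(10) mp by (simp add: add_divide_distrib[symmetric])
  have q1: "qcoords (q1,q2,q3,q4) (lc m (q1,q2,q3,q4) a b c 0) = (a/m, b/m, c/m, 0)"
    unfolding e by (rule qcoords1) (use assms(1,3,4,5) mp s1 in auto)
  have q2: "qcoords (q1,q2,q3,q4) (lc m (q1,q2,q3,q4) a' b' c' 0) = (a'/m, b'/m, c'/m, 0)"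
    unfolding e by (rule qcoords1) (use assms(1,7,8,9) mp s2 in auto)
  have "(a/m, b/m, c/m, 0::real) = (a'/m, b'/m, c'/m, 0)" using q1 q2 assms(11) by metis
  then have "a/m = a'/m" "b/m = b'/m" "c/m = c'/m" by auto
  then show ?thesis using mp by (auto simp: divide_cancel_right)
qed

lemma pair_cong: "a = a' \<Longrightarrow> b = b' \<Longrightarrow> (a,b) = (a',b')" by simp

lemma lc_cong: "a = a' \<Longrightarrow> b = b' \<Longrightarrow> c = c' \<Longrightarrow> d = d' \<Longrightarrow> lc m V a b c d = lc m V a' b' c' d'"
  by simp

lemma cells_explicit:
  assumes "m \<ge> 4"
  shows "Sm V m (m-3,2,0,0) = (lc m V (real m-2) 2 0 0, lc m V (real m-3) 3 0 0, lc m V (real m-3) 2 1 0, lc m V (real m-2) 1 1 0)"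
    "Sm V m (m-4,3,0,0) = (lc m V (real m-3) 3 0 0, lc m V (real m-4) 4 0 0, lc m V (real m-4) 3 1 0, lc m V (real m-3) 2 1 0)"
    "Sm V m (m-4,2,1,0) = (lc m V (real m-3) 2 1 0, lc m V (real m-4) 3 1 0, lc m V (real m-4) 2 2 0, lc m V (real m-3) 1 2 0)"
    "Sm V m (m-3,1,1,0) = (lc m V (real m-2) 1 1 0, lc m V (real m-3) 2 1 0, lc m V (real m-3) 1 2 0, lc m V (real m-2) 0 2 0)"
  using assms by (simp_all only: Sm_def Let_def prod.case of_nat_numeral of_nat_1 of_nat_0 if_True if_False simp_thms zero_neq_numeral not_sym[OF zero_neq_numeral] numeral_One one_neq_zero not_sym[OF one_neq_zero])
     (intro pair_cong lc_cong; simp add: of_nat_diff)+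

lemma lc_neq:
  assumes "orient q1 q2 q3 > 0" "m > 0"
    "a \<ge> 0" "b \<ge> 0" "c \<ge> 0" "a+b+c = real m"
    "a' \<ge> 0" "b' \<ge> 0" "c' \<ge> 0" "a'+b'+c' = real m" "\<not> (a = a' \<and> b = b' \<and> c = c')"
  shows "lc m (q1,q2,q3,q4) a b c 0 \<noteq> lc m (q1,q2,q3,q4) a' b' c' 0"
  using lc_inj3[OF assms(1-10)] assms(11) by blast

lemma exists_missing:
  assumes "labelled_convex_quad Q" "m \<ge> 4" "labyrinth_set Q m W1"
  shows "\<exists>k0\<in>idxA m. Sm Q m k0 \<notin> W1"
proof (rule ccontr)
  assume "\<not> ?thesis"
  then have all: "\<And>k. k \<in> idxA m \<Longrightarrow> Sm Q m k \<in> W1" by blast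
  obtain q1 q2 q3 q4 where Q: "Q = (q1,q2,q3,q4)" by (metis prod.exhaust)
  have o: "orient q1 q2 q3 > 0" using assms(1) by (simp add: labelled_convex_quad_def Q)
  have mp: "m > 0" using assms by simp
  have M: "real m \<ge> 4" using assms by simp
  define C1 where "C1 = Sm Q m (m-3,2,0,0)"
  define C2 where "C2 = Sm Q m (m-4,3,0,0)"
  define C3 where "C3 = Sm Q m (m-4,2,1,0)"
  define C4 where "C4 = Sm Q m (m-3,1,1,0)"
  have inW: "C1 \<in> W1" "C2 \<in> W1" "C3 \<in> W1" "C4 \<in> W1"
    unfolding C1_def C2_def C3_def C4_def using assms(2) by (auto intro!: all simp: idxA_def)
  note E = cells_explicit[OF assms(2), of Q]
  note N = lc_neq[OF o mp, of _ _ _ _ _ _ q4]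
  have "fst C1 \<noteq> fst C2" "fst C1 \<noteq> fst C3" "fst C1 \<noteq> fst C4"
    "fst C2 \<noteq> fst C3" "fst C2 \<noteq> fst C4" "fst C3 \<noteq> fst C4"
    unfolding C1_def C2_def C3_def C4_def unfolding E unfolding Q fst_conv by (rule N; use M in simp)+
  then have d: "C1 \<noteq> C2" "C1 \<noteq> C3" "C1 \<noteq> C4" "C2 \<noteq> C3" "C2 \<noteq> C4" "C3 \<noteq> C4" by auto
  let ?L = "\<lambda>a b c. lc m Q a b c 0"
  have "closed_segment (?L (real m-3) 3 0) (?L (real m-3) 2 1) \<in> sides C1 \<inter> sides C2"
    unfolding C1_def C2_def E by (simp add: sides_def closed_segment_commute)
  then have a12: "adjacent C1 C2" using d by (auto simp: adjacent_def)
  have "closed_segment (?L (real m-4) 3 1) (?L (real m-3) 2 1) \<in> sides C2 \<inter> sides C3"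
    unfolding C2_def C3_def E by (simp add: sides_def closed_segment_commute)
  then have a23: "adjacent C2 C3" using d by (auto simp: adjacent_def)
  have "closed_segment (?L (real m-3) 1 2) (?L (real m-3) 2 1) \<in> sides C3 \<inter> sides C4"
    unfolding C3_def C4_def E by (simp add: sides_def closed_segment_commute)
  then have a34: "adjacent C3 C4" using d by (auto simp: adjacent_def)
  have "closed_segment (?L (real m-2) 1 1) (?L (real m-3) 2 1) \<in> sides C4 \<inter> sides C1"
    unfolding C4_def C1_def E by (simp add: sides_def closed_segment_commute)
  then have a41: "adjacent C4 C1" using d by (auto simp: adjacent_def)
  have "graph_has_cycle W1 adjacent"
    unfolding graph_has_cycle_def
  proof (intro exI conjI)
    show "is_walk adjacent W1 [C1,C2,C3,C4]"
      unfolding is_walk_def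
    proof (intro conjI allI impI)
      fix i assume "Suc i < length [C1,C2,C3,C4]"
      then have "i = 0 \<or> i = 1 \<or> i = 2" by auto
      then show "adjacent ([C1,C2,C3,C4] ! i) ([C1,C2,C3,C4] ! Suc i)" using a12 a23 a34 by auto
    qed (use inW in auto)
  qed (use d a41 in auto)
  then show False using assms(3) by (simp add: labyrinth_set_def graph_is_tree_def)
qed

lemma inner_bound:
  assumes "m > 0" "K1 \<subseteq> idxA m - {k0}" "k0 \<in> idxA m" "Good \<mu> W" "\<mu> \<le> 1/2" "\<mu> \<ge> 0"
  shows "(\<Sum>k\<in>K1. T (Sm W m k)) \<le> (1 - 2 * \<mu> / real m ^ 2) * T W"
proof -
  have fin: "finite (idxA m)" using assms idxA_finite by simp
  have nn: "0 \<le> T (Sm W m k)" if k: "k \<in> idxA m" for k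
  proof -
    have "Good \<mu> (Sm W m k)" using Good_Sm[OF assms(1) k assms(4,5)] by simp
    then show ?thesis by (auto simp: Good_def T_def)
  qed
  have "(\<Sum>k\<in>K1. T (Sm W m k)) \<le> (\<Sum>k\<in>idxA m - {k0}. T (Sm W m k))"
    by (rule sum_mono2) (use fin assms(2) nn in auto)
  also have "\<dots> = T W - T (Sm W m k0)"
    using fin assms(3) by (simp add: sum_diff1 sum_T_Sm[OF assms(1)])
  also have "\<dots> \<le> T W - 2 * \<mu> * T W / real m ^ 2"
    using Good_Sm[OF assms(1,3,4,5)] by simp
  finally show ?thesis by (simp add: algebra_simps)
qed

theorem theorem4p2:
  fixes Q :: quad and m :: nat and W1 :: "quad set"
  assumes "labelled_convex_quad Q"
    and "m \<ge> 4"
    and "labyrinth_set Q m W1"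
  shows "interior (Linf Q W1) = {}"
proof (rule ccontr)
  assume "interior (Linf Q W1) \<noteq> {}"
  then obtain x e where e: "e > 0" "ball x e \<subseteq> Linf Q W1" by (auto simp: mem_interior)
  obtain q1 q2 q3 q4 where Q: "Q = (q1,q2,q3,q4)" by (metis prod.exhaust)
  have oQ: "orient q1 q2 q3 > 0" "orient q3 q4 q1 > 0" "orient q2 q3 q4 > 0" "orient q4 q1 q2 > 0"
    using assms(1) by (auto simp: labelled_convex_quad_def Q)
  have mp: "m > 0" using assms by simp
  obtain k0 where k0: "k0 \<in> idxA m" "Sm Q m k0 \<notin> W1" using exists_missing[OF assms] by blast
  define K1 where "K1 = {k \<in> idxA m. Sm Q m k \<in> W1}"
  have K1sub: "K1 \<subseteq> idxA m - {k0}" using k0 by (auto simp: K1_def)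
  have finK1: "finite K1" using idxA_finite[OF mp] by (auto simp: K1_def)
  have W1sub: "W1 \<subseteq> Sset Q m" using assms(3) by (simp add: labyrinth_set_def)
  have W1eq: "W1 = Sm Q m ` K1" using W1sub by (auto simp: K1_def Sset_def)
  have TQ: "T Q > 0" using oQ by (simp add: T_def oA_def oB_def Q)
  define \<mu> where "\<mu> = min (oA Q) (oB Q) / T Q"
  have mu: "\<mu> > 0" "\<mu> \<le> 1/2" using oQ TQ
    by (auto simp: \<mu>_def oA_def oB_def T_def Q divide_simps min_def)
  have GQ: "Good \<mu> Q"
    using oQ TQ by (auto simp: Good_def \<mu>_def oA_def oB_def oC_def oD_def T_def Q divide_simps min_def)
  define r where "r = 1 - 2 * \<mu> / real m ^ 2"
  have r: "r < 1" "r \<ge> 0"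
  proof -
    show "r < 1" using mu mp by (simp add: r_def)
    have "2 * \<mu> \<le> 1" using mu by simp
    also have "1 \<le> real m ^ 2" using mp by (simp add: one_le_power)
    finally show "r \<ge> 0" using mp by (simp add: r_def)
  qed
  have Wstep: "Wlev Q W1 (Suc n) = (\<lambda>(W,k). Sm W m k) ` (Wlev Q W1 n \<times> K1)" if n1: "n \<ge> 1" for n
  proof -
    obtain n' where n: "n = Suc n'" using n1 by (cases n) auto
    have PWQ: "PW Q W (Sm Q m k) = Sm W m k" if "k \<in> idxA m" for W k
      using PW_Sm[OF oQ(1,2) mp that] Q by simp
    show ?thesis unfolding n
    proof (intro set_eqI iffI)
      fix X assume "X \<in> Wlev Q W1 (Suc (Suc n'))"
      then obtain W W' where X: "X = PW Q W W'" "W' \<in> W1" "W \<in> Wlev Q W1 (Suc n')" by auto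
      then obtain k where k: "k \<in> K1" "W' = Sm Q m k" using W1eq by blast
      then have "X = Sm W m k" using X PWQ by (simp add: K1_def)
      then show "X \<in> (\<lambda>(W,k). Sm W m k) ` (Wlev Q W1 (Suc n') \<times> K1)" using X k by force
    next
      fix X assume "X \<in> (\<lambda>(W,k). Sm W m k) ` (Wlev Q W1 (Suc n') \<times> K1)"
      then obtain W k where X: "X = Sm W m k" "W \<in> Wlev Q W1 (Suc n')" "k \<in> K1" by auto
      then have "X = PW Q W (Sm Q m k)" "Sm Q m k \<in> W1" using PWQ by (auto simp: K1_def)
      then show "X \<in> Wlev Q W1 (Suc (Suc n'))" using X(2) by (simp only: Wlev.simps mem_Collect_eq) blast
    qed
  qed
  have fin: "finite (Wlev Q W1 n)" for n
  proof (induction n rule: nat_less_induct)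
    case (1 n)
    show ?case
    proof (cases n)
      case 0 then show ?thesis by simp
    next
      case (Suc n')
      show ?thesis
      proof (cases n')
        case 0 then show ?thesis using Suc W1eq finK1 by simp
      next
        case (Suc n'')
        then show ?thesis using \<open>n = Suc n'\<close> Wstep[of n'] 1 finK1 by auto
      qed
    qed
  qed
  have good: "\<forall>W\<in>Wlev Q W1 n. Good \<mu> W" for n
  proof (induction n rule: nat_less_induct)
    case (1 n)
    show ?case
    proof (cases n)
      case 0 then show ?thesis by simp
    next
      case (Suc n')
      show ?thesis
      proof (cases n')
        case 0
        show ?thesis
        proof
          fix W assume "W \<in> Wlev Q W1 n"
          then have "W \<in> W1" using Suc 0 by simp
          then obtain k where "k \<in> K1" "W = Sm Q m k" using W1eq by blast
          then show "Good \<mu> W" using Good_Sm[OF mp _ GQ mu(2)] by (auto simp: K1_def)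
        qed
      next
        case (Suc n'')
        then show ?thesis using \<open>n = Suc n'\<close> Wstep[of n'] 1 Good_Sm[OF mp _ _ mu(2)]
          by (auto simp: K1_def)
      qed
    qed
  qed
  define S where "S n = (\<Sum>W\<in>Wlev Q W1 n. T W)" for n
  have Tnn: "T W \<ge> 0" if "Good \<mu> W" for W using that by (auto simp: Good_def T_def)
  have S1: "S 1 \<le> r * T Q"
  proof -
    have "S 1 = (\<Sum>W\<in>Sm Q m ` K1. T W)" by (simp add: S_def W1eq)
    also have "\<dots> \<le> (\<Sum>k\<in>K1. T (Sm Q m k))"
      using sum_image_le[OF finK1, of "\<lambda>W. T W" "Sm Q m"] Good_Sm[OF mp _ GQ mu(2)]
      by (auto simp: K1_def o_def Tnn)
    also have "\<dots> \<le> r * T Q" unfolding r_def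
      by (rule inner_bound[OF mp K1sub k0(1) GQ mu(2)]) (use mu in simp)
    finally show ?thesis .
  qed
  have Sstep: "S (Suc n) \<le> r * S n" if "n \<ge> 1" for n
  proof -
    let ?f = "\<lambda>(W,k). Sm W m k"
    have "S (Suc n) = (\<Sum>W\<in>?f ` (Wlev Q W1 n \<times> K1). T W)" by (simp add: S_def Wstep[OF that])
    also have "\<dots> \<le> (\<Sum>p\<in>Wlev Q W1 n \<times> K1. T (?f p))"
    proof -
      have "(\<Sum>W\<in>?f ` (Wlev Q W1 n \<times> K1). T W) \<le> (\<Sum>p\<in>Wlev Q W1 n \<times> K1. ((\<lambda>W. T W) \<circ> ?f) p)"
      proof (rule sum_image_le)
        show "finite (Wlev Q W1 n \<times> K1)" using fin finK1 by simp
        fix p assume p: "p \<in> Wlev Q W1 n \<times> K1"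
        obtain W k where pk: "p = (W,k)" by (metis prod.exhaust)
        have "Good \<mu> W" "k \<in> idxA m" using p good K1sub by (auto simp: pk)
        then have "Good \<mu> (Sm W m k)" using Good_Sm[OF mp _ _ mu(2)] by blast
        then show "0 \<le> T (?f p)" using Tnn by (simp add: pk)
      qed
      then show ?thesis by (simp add: o_def)
    qed
    also have "\<dots> = (\<Sum>W\<in>Wlev Q W1 n. \<Sum>k\<in>K1. T (Sm W m k))"
      by (simp add: sum.cartesian_product prod.case_distrib)
    also have "\<dots> \<le> (\<Sum>W\<in>Wlev Q W1 n. r * T W)"
      by (rule sum_mono) (unfold r_def, rule inner_bound[OF mp K1sub k0(1) _ mu(2)], use good mu in auto)
    also have "\<dots> = r * S n" by (simp add: S_def sum_distrib_left)
    finally show ?thesis .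
  qed
  have Sbound: "S (Suc n) \<le> r ^ Suc n * T Q" for n
  proof (induction n)
    case 0 then show ?case using S1 by simp
  next
    case (Suc n)
    have "S (Suc (Suc n)) \<le> r * S (Suc n)" by (rule Sstep) simp
    also have "\<dots> \<le> r * (r ^ Suc n * T Q)" using Suc r by (simp add: mult_left_mono)
    finally show ?case by simp
  qed
  have mL: "measure lborel (Llev Q W1 n) \<le> S n" for n
  proof -
    have "measure lborel (Llev Q W1 n) \<le> (\<Sum>W\<in>Wlev Q W1 n. measure lborel (region W))"
      unfolding Llev_def
      by (rule measure_UNION_le[OF fin]) (auto simp: region_def split: prod.splits
          intro!: borel_closed compact_imp_closed finite_imp_compact_convex_hull)
    also have "\<dots> \<le> S n" unfolding S_def
      by (rule sum_mono) (use good measure_region in blast)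
    finally show ?thesis .
  qed
  have finL: "Llev Q W1 n \<in> fmeasurable lborel" for n
    unfolding Llev_def
    by (intro fmeasurable_compact compact_UN fin) (auto simp: region_def split: prod.splits
          intro!: finite_imp_compact_convex_hull)
  have cpos: "measure lborel (ball x e) > 0" using e by (simp add: content_ball_pos)
  have "\<exists>n. r ^ n < measure lborel (ball x e) / T Q"
    by (rule real_arch_pow_inv) (use cpos TQ r in auto)
  then obtain n where n: "r ^ n < measure lborel (ball x e) / T Q" by blast
  have "ball x e \<subseteq> Llev Q W1 (Suc n)" using e(2) by (auto simp: Linf_def)
  then have "measure lborel (ball x e) \<le> measure lborel (Llev Q W1 (Suc n))"
    by (intro measure_mono_fmeasurable finL) auto
  also have "\<dots> \<le> r ^ Suc n * T Q" using mL Sbound by (meson order_trans)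
  also have "\<dots> \<le> r ^ n * T Q" using r TQ by (simp add: mult_right_mono power_le_imp_le_exp mult_left_le_one_le)
  also have "\<dots> < measure lborel (ball x e)" using n TQ by (simp add: pos_less_divide_eq)
  finally show False by simp
qed

end
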